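(* Let $G=(V,E)$ be a simple 2-vertex-connected graph without irrelevant edges and without non-isolating 2-vertex-cuts. Let $(V_1,V_2)$ be a partition of $V$ such that for each $i\in\{1,2\}$, $|V_i|\ge 3$, and if $|V_i|=3$ then $G[V_i]$ is a triangle. Then there is a matching of size $3$ in $G$ consisting of edges each having one endpoint in $V_1$ and one in $V_2$.
   Context: A $k$-vertex-cut is a set of $k$ nodes whose removal disconnects the graph; a graph is 2-vertex-connected if it has at least 3 nodes, is connected and has no 1-vertex-cut. An edge $uv$ is irrelevant if $\{u,v\}$ is a 2-vertex-cut. A 2-vertex-cut $\{u,v\}$ is isolating if $G\setminus\{u,v\}$ has exactly two connected components, one of which consists of a single node; otherwise it is non-isolating. *)

theory Defs
  imports Main
begin

definition simple_graph :: "'a set \<Rightarrow> 'a set set \<Rightarrow> bool" where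
  "simple_graph V E \<longleftrightarrow> finite V \<and> (\<forall>e\<in>E. e \<subseteq> V \<and> card e = 2)"

definition reach_in :: "'a set set \<Rightarrow> 'a set \<Rightarrow> 'a \<Rightarrow> 'a \<Rightarrow> bool" where
  "reach_in E S = (\<lambda>x y. x \<in> S \<and> y \<in> S \<and> {x, y} \<in> E)\<^sup>*\<^sup>*"

definition connected_on :: "'a set set \<Rightarrow> 'a set \<Rightarrow> bool" where
  "connected_on E S \<longleftrightarrow> (\<forall>x\<in>S. \<forall>y\<in>S. reach_in E S x y)"

definition components_on :: "'a set set \<Rightarrow> 'a set \<Rightarrow> 'a set set" where
  "components_on E S = (\<lambda>x. {y\<in>S. reach_in E S x y}) ` S"

definition vertex_cut :: "'a set \<Rightarrow> 'a set set \<Rightarrow> 'a set \<Rightarrow> bool" where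
  "vertex_cut V E X \<longleftrightarrow> X \<subseteq> V \<and> \<not> connected_on E (V - X)"

definition two_vertex_connected :: "'a set \<Rightarrow> 'a set set \<Rightarrow> bool" where
  "two_vertex_connected V E \<longleftrightarrow> card V \<ge> 3 \<and> connected_on E V \<and>
     (\<forall>v\<in>V. \<not> vertex_cut V E {v})"

definition irrelevant_edge :: "'a set \<Rightarrow> 'a set set \<Rightarrow> 'a set \<Rightarrow> bool" where
  "irrelevant_edge V E e \<longleftrightarrow> e \<in> E \<and> vertex_cut V E e"

definition two_vertex_cut :: "'a set \<Rightarrow> 'a set set \<Rightarrow> 'a \<Rightarrow> 'a \<Rightarrow> bool" where
  "two_vertex_cut V E u v \<longleftrightarrow> u \<noteq> v \<and> vertex_cut V E {u, v}"

definition isolating_cut :: "'a set \<Rightarrow> 'a set set \<Rightarrow> 'a \<Rightarrow> 'a \<Rightarrow> bool" where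
  "isolating_cut V E u v \<longleftrightarrow> two_vertex_cut V E u v \<and>
     card (components_on E (V - {u, v})) = 2 \<and>
     (\<exists>C\<in>components_on E (V - {u, v}). card C = 1)"

definition non_isolating_cut :: "'a set \<Rightarrow> 'a set set \<Rightarrow> 'a \<Rightarrow> 'a \<Rightarrow> bool" where
  "non_isolating_cut V E u v \<longleftrightarrow> two_vertex_cut V E u v \<and> \<not> isolating_cut V E u v"

definition is_triangle_on :: "'a set set \<Rightarrow> 'a set \<Rightarrow> bool" where
  "is_triangle_on E S \<longleftrightarrow> card S = 3 \<and> (\<forall>x\<in>S. \<forall>y\<in>S. x \<noteq> y \<longrightarrow> {x, y} \<in> E)"

definition matching :: "'a set set \<Rightarrow> bool" where
  "matching M \<longleftrightarrow> (\<forall>e\<in>M. \<forall>f\<in>M. e \<noteq> f \<longrightarrow> e \<inter> f = {})"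

end

theory Submission
  imports Defs
begin

lemma reach_side:
  assumes "reach_in E S x y" "x \<in> A" "S = A \<union> B"
    and "\<forall>u\<in>A. \<forall>v\<in>B. {u,v} \<notin> E"
  shows "y \<in> A"
  using assms(1,2) unfolding reach_in_def
proof (induction rule: rtranclp_induct)
  case base then show ?case by simp
next
  case (step y z) then show ?case using assms(3,4) by blast
qed

lemma not_conn:
  assumes "S = A \<union> B" "A \<inter> B = {}" "A \<noteq> {}" "B \<noteq> {}"
    and "\<forall>u\<in>A. \<forall>v\<in>B. {u,v} \<notin> E"
  shows "\<not> connected_on E S"
proof
  assume c: "connected_on E S"
  obtain a b where "a \<in> A" "b \<in> B" using assms by blast
  then have "reach_in E S a b" using c assms(1) unfolding connected_on_def by blast
  then have "b \<in> A" using reach_side[OF _ \<open>a\<in>A\<close> assms(1) assms(5)] by blast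
  then show False using \<open>b\<in>B\<close> assms(2) by blast
qed

lemma comps2:
  assumes S: "S = A \<union> B" and dj: "A \<inter> B = {}" and "A \<noteq> {}" "B \<noteq> {}"
    and nb: "\<forall>u\<in>A. \<forall>v\<in>B. {u,v} \<notin> E"
    and c2: "card (components_on E S) = 2"
  shows "components_on E S = {A, B}"
proof -
  have nb': "\<forall>u\<in>B. \<forall>v\<in>A. {u,v} \<notin> E" using nb by (metis insert_commute)
  have S': "S = B \<union> A" using S by (simp add: Un_commute)
  define comp where "comp x = {y\<in>S. reach_in E S x y}" for x
  have cdef: "components_on E S = comp ` S" unfolding components_on_def comp_def by simp
  have selfc: "x \<in> comp x" if "x \<in> S" for x
    using that unfolding comp_def reach_in_def by simp
  have cA: "comp x \<subseteq> A" if "x \<in> A" for x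
  proof
    fix y assume "y \<in> comp x"
    then have "reach_in E S x y" unfolding comp_def by simp
    then show "y \<in> A" using reach_side[OF _ that S nb] by simp
  qed
  have cB: "comp x \<subseteq> B" if "x \<in> B" for x
  proof
    fix y assume "y \<in> comp x"
    then have "reach_in E S x y" unfolding comp_def by simp
    then show "y \<in> B" using reach_side[OF _ that S' nb'] by simp
  qed
  have inS: "x \<in> S" if "x \<in> A \<or> x \<in> B" for x using that S by simp
  obtain a0 where a0: "a0 \<in> A" using assms(3) by blast
  obtain b0 where b0: "b0 \<in> B" using assms(4) by blast
  have dAB: "x \<notin> B" if "x \<in> A" for x using that dj by blast
  have xA: "x \<in> comp a0 \<Longrightarrow> x \<in> A" for x using cA[OF a0] by blast
  have xB: "x \<in> comp b0 \<Longrightarrow> x \<in> B" for x using cB[OF b0] by blast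
  have ne: "comp a0 \<noteq> comp b0"
  proof
    assume h: "comp a0 = comp b0"
    have "a0 \<in> comp a0" using selfc inS a0 by simp
    then have "a0 \<in> B" using h xB by simp
    then show False using dAB a0 by simp
  qed
  have fin: "finite (components_on E S)" by (rule card_ge_0_finite) (simp add: c2)
  have m1: "comp a0 \<in> components_on E S" unfolding cdef using inS a0 by simp
  have m2: "comp b0 \<in> components_on E S" unfolding cdef using inS b0 by simp
  have sub: "{comp a0, comp b0} \<subseteq> components_on E S" using m1 m2 by simp
  have c2': "card {comp a0, comp b0} = 2" using ne by simp
  have eq0: "{comp a0, comp b0} = components_on E S"
    using card_subset_eq[OF fin sub] c2' c2 by simp
  have eq: "components_on E S = {comp a0, comp b0}" using eq0 by simp
  have ca: "comp x = comp a0" if x: "x \<in> A" for x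
  proof -
    have "comp x \<in> components_on E S" unfolding cdef using inS x by simp
    then have "comp x = comp a0 \<or> comp x = comp b0" using eq by simp
    moreover have "comp x \<noteq> comp b0"
    proof
      assume h: "comp x = comp b0"
      have "x \<in> comp x" using selfc inS x by simp
      then have "x \<in> B" using h xB by simp
      then show False using dAB x by simp
    qed
    ultimately show ?thesis by simp
  qed
  have cb: "comp x = comp b0" if x: "x \<in> B" for x
  proof -
    have "comp x \<in> components_on E S" unfolding cdef using inS x by simp
    then have "comp x = comp a0 \<or> comp x = comp b0" using eq by simp
    moreover have "comp x \<noteq> comp a0"
    proof
      assume h: "comp x = comp a0"
      have "x \<in> comp x" using selfc inS x by simp
      then have "x \<in> A" using h xA by simp
      then show False using dAB x by simp
    qed
    ultimately show ?thesis by simp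
  qed
  have "A \<subseteq> comp a0"
  proof
    fix x assume x: "x \<in> A"
    have "x \<in> comp x" using selfc inS x by simp
    then show "x \<in> comp a0" using ca[OF x] by simp
  qed
  then have A: "comp a0 = A" using cA[OF a0] by (rule subset_antisym[rotated])
  have "B \<subseteq> comp b0"
  proof
    fix x assume x: "x \<in> B"
    have "x \<in> comp x" using selfc inS x by simp
    then show "x \<in> comp b0" using cb[OF x] by simp
  qed
  then have B: "comp b0 = B" using cB[OF b0] by (rule subset_antisym[rotated])
  show ?thesis using eq A B by simp
qed

lemma three:
  fixes R :: "'a \<Rightarrow> 'a \<Rightarrow> bool"
  assumes P: "\<forall>a b. \<exists>x y. R x y \<and> x \<noteq> a \<and> x \<noteq> b \<and> y \<noteq> a \<and> y \<noteq> b"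
  shows "\<exists>x1 x2 x3 y1 y2 y3. R x1 y1 \<and> R x2 y2 \<and> R x3 y3 \<and> x1 \<noteq> x2 \<and> x1 \<noteq> x3 \<and> x2 \<noteq> x3
      \<and> y1 \<noteq> y2 \<and> y1 \<noteq> y3 \<and> y2 \<noteq> y3"
proof -
  obtain x1 y1 where e1: "R x1 y1" using P by blast
  obtain x2 y2 where e2: "R x2 y2" "x2 \<noteq> x1" "y2 \<noteq> y1" using P[rule_format, of x1 y1] by blast
  show ?thesis
  proof (cases "\<exists>x y. R x y \<and> x \<noteq> x1 \<and> x \<noteq> x2 \<and> y \<noteq> y1 \<and> y \<noteq> y2")
    case True then show ?thesis using e1 e2 by blast
  next
    case False
    then have H: "\<And>x y. R x y \<Longrightarrow> x = x1 \<or> x = x2 \<or> y = y1 \<or> y = y2" by blast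
    obtain a ya where a: "R a ya" "a \<noteq> x1" "a \<noteq> x2" using P[rule_format, of x1 x2] by blast
    have ya: "ya = y1 \<or> ya = y2" using H[OF a(1)] a by blast
    obtain xb b where b: "R xb b" "b \<noteq> y1" "b \<noteq> y2" using P[rule_format, of y1 y2] by blast
    have xb: "xb = x1 \<or> xb = x2" using H[OF b(1)] b by blast
    obtain c d where cd1: "R c d" "c \<noteq> x2" "d \<noteq> y1" using P[rule_format, of y1 x2] by blast
    obtain e f where ef1: "R e f" "e \<noteq> x1" "f \<noteq> y2" using P[rule_format, of y2 x1] by blast
    have cd: "c = x1 \<or> d = y2" using H[OF cd1(1)] cd1 by blast
    have ef: "e = x2 \<or> f = y1" using H[OF ef1(1)] ef1 by blast
    consider "ya = y1" "xb = x1" | "ya = y2" "xb = x2" | "ya = y1" "xb = x2" | "ya = y2" "xb = x1"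
      using ya xb by blast
    then show ?thesis
    proof cases
      case 1 then show ?thesis using a b e1 e2 by blast
    next
      case 2 then show ?thesis using a b e1 e2 by blast
    next
      case 3
      show ?thesis
      proof (cases "c = x1")
        case True
        show ?thesis
        proof (cases "d = y2")
          case True then show ?thesis using 3 \<open>c = x1\<close> a b cd1 e1 e2 by blast
        next
          case False then show ?thesis using 3 \<open>c = x1\<close> a cd1 e1 e2 by blast
        qed
      next
        case False
        then have "d = y2" using cd by blast
        then show ?thesis using 3 False a b cd1 e1 e2 by blast
      qed
    next
      case 4
      show ?thesis
      proof (cases "e = x2")
        case True
        show ?thesis
        proof (cases "f = y1")
          case True then show ?thesis using 4 \<open>e = x2\<close> a b ef1 e1 e2 by blast
        next
          case False then show ?thesis using 4 \<open>e = x2\<close> a ef1 e1 e2 by blast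
        qed
      next
        case False
        then have "f = y1" using ef by blast
        then show ?thesis using 4 False a b ef1 e1 e2 by blast
      qed
    qed
  qed
qed


lemma three_obt:
  fixes R :: "'a \<Rightarrow> 'a \<Rightarrow> bool"
  assumes P: "\<forall>a b. \<exists>x y. R x y \<and> x \<noteq> a \<and> x \<noteq> b \<and> y \<noteq> a \<and> y \<noteq> b"
  obtains x1 x2 x3 y1 y2 y3 where "R x1 y1" "R x2 y2" "R x3 y3" "x1 \<noteq> x2" "x1 \<noteq> x3" "x2 \<noteq> x3"
      "y1 \<noteq> y2" "y1 \<noteq> y3" "y2 \<noteq> y3"
  using three[OF P] by (elim exE conjE) (rule that; assumption)

lemma mk_matching:
  assumes "x1 \<in> V1" "x2 \<in> V1" "x3 \<in> V1" "y1 \<in> V2" "y2 \<in> V2" "y3 \<in> V2"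
    and "V1 \<inter> V2 = {}"
    and "{x1,y1} \<in> E" "{x2,y2} \<in> E" "{x3,y3} \<in> E"
    and "x1 \<noteq> x2" "x1 \<noteq> x3" "x2 \<noteq> x3" "y1 \<noteq> y2" "y1 \<noteq> y3" "y2 \<noteq> y3"
  shows "\<exists>M \<subseteq> E. card M = 3 \<and> matching M \<and>
           (\<forall>e\<in>M. \<exists>x\<in>V1. \<exists>y\<in>V2. e = {x, y})"
proof (intro exI conjI)
  let ?M = "{{x1,y1},{x2,y2},{x3,y3}}"
  have d: "x1 \<noteq> y2" "x1 \<noteq> y3" "x2 \<noteq> y1" "x2 \<noteq> y3" "x3 \<noteq> y1" "x3 \<noteq> y2"
          "x1 \<noteq> y1" "x2 \<noteq> y2" "x3 \<noteq> y3"
    using assms(1-7) by blast+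
  have n: "{x1,y1} \<noteq> {x2,y2}" "{x1,y1} \<noteq> {x3,y3}" "{x2,y2} \<noteq> {x3,y3}"
    using assms(11-16) d by (auto simp: doubleton_eq_iff)
  show "?M \<subseteq> E" using assms(8-10) by blast
  show "card ?M = 3" using n by simp
  show "matching ?M" unfolding matching_def using assms(11-16) d by auto
  show "\<forall>e\<in>?M. \<exists>x\<in>V1. \<exists>y\<in>V2. e = {x, y}" using assms(1-6) by blast
qed

theorem lemma3:
  fixes V :: "'a set" and E :: "'a set set" and V1 V2 :: "'a set"
  assumes "simple_graph V E"
    and "two_vertex_connected V E"
    and "\<forall>e\<in>E. \<not> irrelevant_edge V E e"
    and "\<forall>u v. \<not> non_isolating_cut V E u v"
    and "V1 \<union> V2 = V" and "V1 \<inter> V2 = {}"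
    and "card V1 \<ge> 3" and "card V2 \<ge> 3"
    and "card V1 = 3 \<longrightarrow> is_triangle_on E V1"
    and "card V2 = 3 \<longrightarrow> is_triangle_on E V2"
  shows "\<exists>M \<subseteq> E. card M = 3 \<and> matching M \<and>
           (\<forall>e\<in>M. \<exists>x\<in>V1. \<exists>y\<in>V2. e = {x, y})"
proof -
  have finV: "finite V" using assms(1) unfolding simple_graph_def by blast
  have fin1: "finite V1" and fin2: "finite V2" using finV assms(5) by auto
  have connV: "connected_on E V" and cut1: "\<And>v. v \<in> V \<Longrightarrow> \<not> vertex_cut V E {v}"
    using assms(2) unfolding two_vertex_connected_def by auto
  have small: "V' - {a,b} \<noteq> {}" if "finite V'" "card V' \<ge> 3" for V' :: "'a set" and a b
  proof
    assume "V' - {a,b} = {}"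
    then have "V' \<subseteq> {a,b}" by blast
    then have "card V' \<le> card {a,b}" by (simp add: card_mono)
    also have "\<dots> \<le> 2" by (simp add: card_insert_if)
    finally show False using that(2) by simp
  qed
  have tri: False if h1: "card (Vi - {a,b}) = 1" and h2: "a \<noteq> b" "a \<in> V" "b \<in> V"
    and fin: "finite Vi" and c3: "card Vi \<ge> 3" and t: "card Vi = 3 \<longrightarrow> is_triangle_on E Vi"
    and vc: "vertex_cut V E {a,b}" for Vi a b
  proof -
    obtain z where z: "Vi - {a,b} = {z}" using h1 card_1_singletonE by blast
    have sub: "Vi \<subseteq> {z,a,b}" using z by blast
    have "card Vi \<le> card {z,a,b}" using sub by (simp add: card_mono)
    also have "\<dots> \<le> 3" by (simp add: card_insert_if)
    finally have c: "card Vi = 3" using c3 by simp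
    have ab: "a \<in> Vi \<and> b \<in> Vi"
    proof (rule ccontr)
      assume "\<not> (a \<in> Vi \<and> b \<in> Vi)"
      then have "Vi \<subseteq> {z,a} \<or> Vi \<subseteq> {z,b}" using sub by blast
      then have "card Vi \<le> 2"
      proof
        assume "Vi \<subseteq> {z,a}"
        then have "card Vi \<le> card {z,a}" by (simp add: card_mono)
        also have "\<dots> \<le> 2" by (simp add: card_insert_if)
        finally show ?thesis .
      next
        assume "Vi \<subseteq> {z,b}"
        then have "card Vi \<le> card {z,b}" by (simp add: card_mono)
        also have "\<dots> \<le> 2" by (simp add: card_insert_if)
        finally show ?thesis .
      qed
      then show False using c by simp
    qed
    have "{a,b} \<in> E" using t c ab h2 unfolding is_triangle_on_def by blast
    then have "irrelevant_edge V E {a,b}" using vc unfolding irrelevant_edge_def by blast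
    then show False using assms(3) \<open>{a,b} \<in> E\<close> by blast
  qed
  have P: "\<forall>a b. \<exists>x y. (x \<in> V1 \<and> y \<in> V2 \<and> {x,y} \<in> E) \<and> x \<noteq> a \<and> x \<noteq> b \<and> y \<noteq> a \<and> y \<noteq> b"
  proof (rule ccontr)
    assume "\<not> ?thesis"
    then obtain a b where N: "\<forall>x\<in>V1. \<forall>y\<in>V2. {x,y} \<in> E \<longrightarrow> x = a \<or> x = b \<or> y = a \<or> y = b"
      by blast
    define A where "A = V1 - {a,b}"
    define B where "B = V2 - {a,b}"
    have AB1: "V - {a,b} = A \<union> B" using assms(5) unfolding A_def B_def by blast
    have AB2: "A \<inter> B = {}" using assms(6) unfolding A_def B_def by blast
    have AB3: "A \<noteq> {}" using small[OF fin1 assms(7), of a b] unfolding A_def .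
    have AB4: "B \<noteq> {}" using small[OF fin2 assms(8), of a b] unfolding B_def .
    note AB = AB1 AB2 AB3 AB4
    have nb: "\<forall>u\<in>A. \<forall>v\<in>B. {u,v} \<notin> E" using N unfolding A_def B_def by blast
    have nc: "\<not> connected_on E (V - {a,b})" using not_conn[OF AB nb] .
    have cons: "(a \<notin> V \<and> b \<notin> V) \<or> (\<exists>v. v \<in> V \<and> V - {a,b} = V - {v}) \<or> (a \<noteq> b \<and> a \<in> V \<and> b \<in> V)"
    proof (cases "a \<in> V")
      case True
      show ?thesis
      proof (cases "b \<in> V \<and> a \<noteq> b")
        case True then show ?thesis using \<open>a \<in> V\<close> by blast
      next
        case False
        then have "V - {a,b} = V - {a}" by blast
        then show ?thesis using \<open>a \<in> V\<close> by blast
      qed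
    next
      case False
      show ?thesis
      proof (cases "b \<in> V")
        case True
        then have "V - {a,b} = V - {b}" using False by blast
        then show ?thesis using True by blast
      qed (use False in blast)
    qed
    consider "a \<notin> V" "b \<notin> V" | v where "v \<in> V" "V - {a,b} = V - {v}" | "a \<noteq> b" "a \<in> V" "b \<in> V"
      using cons by blast
    then show False
    proof cases
      case 1
      then have "V - {a,b} = V" by blast
      then show False using nc connV by simp
    next
      case 2
      then have "vertex_cut V E {v}" using nc unfolding vertex_cut_def by simp
      then show False using cut1 2 by blast
    next
      case 3
      have vc: "vertex_cut V E {a,b}" using nc 3 unfolding vertex_cut_def by simp
      then have "two_vertex_cut V E a b" using 3 unfolding two_vertex_cut_def by simp
      then have iso: "isolating_cut V E a b" using assms(4) unfolding non_isolating_cut_def by blast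
      then have c2: "card (components_on E (V - {a,b})) = 2"
        and "\<exists>C\<in>components_on E (V - {a, b}). card C = 1"
        unfolding isolating_cut_def by blast+
      then have "card A = 1 \<or> card B = 1" using comps2[OF AB nb] by simp
      then show False
      proof
        assume "card A = 1"
        then show False using tri[OF _ 3 fin1 assms(7) assms(9) vc] unfolding A_def by blast
      next
        assume "card B = 1"
        then show False using tri[OF _ 3 fin2 assms(8) assms(10) vc] unfolding B_def by blast
      qed
    qed
  qed
  have P': "\<forall>a b. \<exists>x y. (\<lambda>x y. x \<in> V1 \<and> y \<in> V2 \<and> {x,y} \<in> E) x y \<and> x \<noteq> a \<and> x \<noteq> b \<and> y \<noteq> a \<and> y \<noteq> b"
    using P by simp
  obtain x1 x2 x3 y1 y2 y3 where
    r0: "x1 \<in> V1 \<and> y1 \<in> V2 \<and> {x1,y1} \<in> E" "x2 \<in> V1 \<and> y2 \<in> V2 \<and> {x2,y2} \<in> E"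
       "x3 \<in> V1 \<and> y3 \<in> V2 \<and> {x3,y3} \<in> E"
    and d: "x1 \<noteq> x2" "x1 \<noteq> x3" "x2 \<noteq> x3" "y1 \<noteq> y2" "y1 \<noteq> y3" "y2 \<noteq> y3"
    by (rule three_obt[OF P'])
  have r: "x1 \<in> V1" "y1 \<in> V2" "{x1,y1} \<in> E" "x2 \<in> V1" "y2 \<in> V2" "{x2,y2} \<in> E"
       "x3 \<in> V1" "y3 \<in> V2" "{x3,y3} \<in> E" using r0 by auto
  show ?thesis by (rule mk_matching[OF r(1,4,7,2,5,8) assms(6) r(3,6,9) d])
qed

end
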